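(* Let $q>1$. For every integer $N\ge1$ and real $x\neq0$, $$H_{N+1}(x;q)=\frac{[N+1]_q}{N+1}\Big([2]_q x-\Big(\frac{2}{[2]_q}+(q-1)x^2\Big)D_x+\sum_{l=2}^{N}\frac{(1-q^2)^l x^{l+1}}{[2]_q^{\,l-1}[l+1]_q}D_x^{\,l}\Big)H_N(x;q),$$ where $D_x^l$ denotes the $l$-fold iterate of $D_x$ and the sum is empty for $N=1$.
   Context: For $n\ge 0$ let $[n]_q=\frac{q^n-1}{q-1}$, $[0]_q!=1$, $[n]_q!=[1]_q\cdots[n]_q$, and $e_q(z)=\sum_{n\ge0}z^n/[n]_q!$. The $q$-derivative is $D_xf(x)=\frac{f(qx)-f(x)}{(q-1)x}$. The $q$-Hermite polynomials $H_N(x;q)$ are defined by the identity of formal power series in $t$: $e^{-t^2}e_q([2]_q t x)=\sum_{N\ge0}H_N(x;q)\,t^N/[N]_q!$. *)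

theory Defs
  imports "HOL-Computational_Algebra.Formal_Power_Series"
begin

definition qnum :: "real \<Rightarrow> nat \<Rightarrow> real" where
  "qnum q n = (q ^ n - 1) / (q - 1)"

definition qfact :: "real \<Rightarrow> nat \<Rightarrow> real" where
  "qfact q n = (\<Prod>k=1..n. qnum q k)"

text \<open>q-exponential e_q(z) as a formal power series in t, with z = c t\<close>
definition qexp_fps :: "real \<Rightarrow> real \<Rightarrow> real fps" where
  "qexp_fps q c = Abs_fps (\<lambda>n. c ^ n / qfact q n)"

definition qderiv :: "real \<Rightarrow> (real \<Rightarrow> real) \<Rightarrow> real \<Rightarrow> real" where
  "qderiv q f x = (f (q * x) - f x) / ((q - 1) * x)"

text \<open>q-Hermite polynomials: e^{-t^2} e_q([2]_q t x) = sum_N H_N(x;q) t^N / [N]_q!\<close>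
definition qHermite :: "nat \<Rightarrow> real \<Rightarrow> real \<Rightarrow> real" where
  "qHermite N x q = qfact q N *
     fps_nth ((fps_compose (fps_exp 1) (- (fps_X ^ 2))) * qexp_fps q (qnum q 2 * x)) N"

end

theory Submission
  imports Defs
begin
unbundle fps_syntax

lemma qnum_pos: "q > 1 \<Longrightarrow> n \<ge> 1 \<Longrightarrow> qnum q n > 0"
  unfolding qnum_def by (simp add: one_less_power)

lemma qnum_0[simp]: "qnum q 0 = 0" by (simp add: qnum_def)

lemma qfact_Suc: "qfact q (Suc n) = qfact q n * qnum q (Suc n)"
  unfolding qfact_def by simp

lemma qfact_pos: "q > 1 \<Longrightarrow> qfact q n > 0"
  unfolding qfact_def by (rule prod_pos) (auto intro: qnum_pos)

lemma qnum_split: "q > 1 \<Longrightarrow> qnum q (a + b) = qnum q a + q ^ a * qnum q b"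
proof -
  assume "q > 1" then have "q - 1 \<noteq> 0" by simp
  have e1: "qnum q n * (q - 1) = q ^ n - 1" for n using \<open>q - 1 \<noteq> 0\<close> by (simp add: qnum_def)
  have "(qnum q a + q ^ a * qnum q b) * (q - 1) = qnum q a * (q - 1) + q ^ a * (qnum q b * (q - 1))"
    by (simp add: algebra_simps)
  also have "\<dots> = q ^ a - 1 + q ^ a * (q ^ b - 1)" by (simp only: e1)
  also have "\<dots> = qnum q (a + b) * (q - 1)" by (simp only: e1) (simp add: power_add algebra_simps)
  finally have "qnum q (a + b) * (q - 1) = (qnum q a + q ^ a * qnum q b) * (q - 1)" ..
  then show ?thesis using \<open>q - 1 \<noteq> 0\<close> by simp
qed

definition gsum :: "real \<Rightarrow> nat \<Rightarrow> real" where
  "gsum q n = (\<Sum>l\<le>n. (1 - q) ^ l / qnum q (l + 1) / qfact q (n - l))"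

lemma gsum_rec:
  assumes q: "q > 1"
  shows "qnum q (Suc n + 1) * gsum q (Suc n) = 1 / qfact q (Suc n) + gsum q n"
proof -
  define s where "s l = (1 - q) ^ l / qnum q (l + 1)" for l
  define e where "e m = 1 / qfact q m" for m
  have sq: "s l * qnum q (l + 1) = (1 - q) ^ l" for l
    using qnum_pos[OF q, of "l+1"] by (simp add: s_def)
  have sq2: "s l * (q ^ (l + 1) - 1) = - ((1 - q) ^ (l + 1))" for l
  proof -
    have h: "q ^ (l+1) - 1 = (q - 1) * qnum q (l+1)" using q by (simp add: qnum_def)
    have "s l * (q ^ (l + 1) - 1) = (q - 1) * (s l * qnum q (l+1))" unfolding h by (simp only: mult_ac)
    also have "\<dots> = (q - 1) * (1 - q) ^ l" by (simp only: sq)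
    also have "\<dots> = - ((1 - q) ^ (l + 1))" by (simp add: algebra_simps)
    finally show ?thesis .
  qed
  have em: "qnum q (Suc m) * e (Suc m) = e m" for m
    using qfact_pos[OF q, of m] qnum_pos[OF q, of "Suc m"] by (simp add: e_def qfact_Suc)
  have g: "gsum q n = (\<Sum>l\<le>n. s l * e (n - l))" for n
    by (simp add: gsum_def s_def e_def)
  have split: "qnum q (Suc n + 1) = qnum q (l + 1) + q ^ (l + 1) * qnum q (Suc n - l)" if "l \<le> Suc n" for l
    using qnum_split[OF q, of "l+1" "Suc n - l"] that by simp
  have "qnum q (Suc n + 1) * gsum q (Suc n) =
     (\<Sum>l\<le>Suc n. (1 - q) ^ l * e (Suc n - l)) + (\<Sum>l\<le>Suc n. s l * q ^ (l+1) * (qnum q (Suc n - l) * e (Suc n - l)))"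
    unfolding g sum_distrib_left sum.distrib[symmetric]
  proof (rule sum.cong[OF refl])
    fix l assume "l \<in> {..Suc n}"
    then have l: "l \<le> Suc n" by simp
    show "qnum q (Suc n + 1) * (s l * e (Suc n - l)) =
      (1 - q) ^ l * e (Suc n - l) + s l * q ^ (l + 1) * (qnum q (Suc n - l) * e (Suc n - l))"
      unfolding split[OF l] sq[of l, symmetric] by (simp only: algebra_simps)
  qed
  also have "(\<Sum>l\<le>Suc n. s l * q ^ (l+1) * (qnum q (Suc n - l) * e (Suc n - l)))
      = (\<Sum>l\<le>n. s l * q ^ (l+1) * e (n - l))"
    by (simp add: Suc_diff_le em)
  also have "(\<Sum>l\<le>Suc n. (1 - q) ^ l * e (Suc n - l)) = e (Suc n) + (\<Sum>l\<le>n. (1 - q) ^ (l+1) * e (n - l))"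
    by (subst sum.atMost_Suc_shift) simp
  also have "(\<Sum>l\<le>n. (1 - q) ^ (l+1) * e (n - l)) = - (\<Sum>l\<le>n. s l * (q ^ (l + 1) - 1) * e (n - l))"
    unfolding sq2 by (simp add: sum_negf)
  finally show ?thesis unfolding g
    by (simp add: e_def algebra_simps sum.distrib sum_subtractf)
qed

lemma gsum_eq:
  assumes q: "q > 1"
  shows "gsum q n = real (n + 1) / qfact q (n + 1)"
proof (induction n)
  case 0
  then show ?case using qnum_pos[OF q, of 1] by (simp add: gsum_def qfact_def)
next
  case (Suc n)
  have pos: "qnum q (Suc n + 1) > 0" using qnum_pos[OF q] by simp
  have "qnum q (Suc n + 1) * gsum q (Suc n) = 1 / qfact q (Suc n) + real (n + 1) / qfact q (n + 1)"
    using gsum_rec[OF q, of n] Suc by simp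
  also have "\<dots> = real (Suc n + 1) / qfact q (Suc n)" by (simp add: add_divide_distrib[symmetric])
  finally show ?case using pos qfact_pos[OF q, of "Suc n"]
    by (simp add: qfact_Suc[of q "Suc n"] field_simps)
qed


definition AA :: "real fps" where "AA = fps_compose (fps_exp 1) (- (fps_X ^ 2))"
definition hh :: "real \<Rightarrow> nat \<Rightarrow> real \<Rightarrow> real" where
  "hh q N y = (AA * qexp_fps q (qnum q 2 * y)) $ N"

lemma qnum2: "q > 1 \<Longrightarrow> qnum q 2 = q + 1"
  unfolding qnum_def by (simp add: power2_eq_square field_simps)

lemma qHermite_hh: "qHermite N y q = qfact q N * hh q N y"
  unfolding qHermite_def hh_def AA_def by simp

lemma hh_sum: "hh q N y = (\<Sum>i=0..N. AA $ i * ((qnum q 2 * y) ^ (N - i) / qfact q (N - i)))"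
  unfolding hh_def fps_mult_nth qexp_fps_def by simp

lemma qderiv_sum: "qderiv q (\<lambda>y. \<Sum>i\<in>S. f i y) x = (\<Sum>i\<in>S. qderiv q (f i) x)"
  unfolding qderiv_def by (simp only: sum_divide_distrib[symmetric] sum_subtractf)

lemma qderiv_cmult: "qderiv q (\<lambda>y. k * f y) x = k * qderiv q f x"
  unfolding qderiv_def by (simp add: algebra_simps)

lemma D_e:
  assumes q: "q > 1" and y: "y \<noteq> 0"
  shows "qderiv q (\<lambda>y. (c * y) ^ m / qfact q m) y =
    (if m = 0 then 0 else c * ((c * y) ^ (m - 1) / qfact q (m - 1)))"
proof (cases m)
  case 0 then show ?thesis by (simp add: qderiv_def)
next
  case (Suc k)
  have ne: "q - 1 \<noteq> 0" using q by simp
  have fp: "qfact q k > 0" using qfact_pos[OF q] by simp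
  have fm: "qfact q m > 0" using qfact_pos[OF q] by simp
  have h: "(c * (q * y)) ^ m = q ^ m * (c * y) ^ m" by (simp add: power_mult_distrib)
  have "qderiv q (\<lambda>y. (c * y) ^ m / qfact q m) y = (c * y) ^ m * ((q ^ m - 1) / (q - 1)) / (y * qfact q m)"
    unfolding qderiv_def h using ne y fm by (simp add: field_simps)
  also have "\<dots> = (c * y) ^ m * qnum q m / (y * qfact q m)" by (simp add: qnum_def)
  also have "\<dots> = c * ((c * y) ^ k / qfact q k)"
    using Suc y fp qnum_pos[OF q, of "Suc k"] by (simp add: qfact_Suc field_simps)
  finally show ?thesis using Suc by simp
qed

lemma D_hh:
  assumes q: "q > 1" and y: "y \<noteq> 0"
  shows "qderiv q (hh q (Suc N)) y = qnum q 2 * hh q N y"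
proof -
  have "qderiv q (hh q (Suc N)) y =
     (\<Sum>i=0..Suc N. AA $ i * qderiv q (\<lambda>y. (qnum q 2 * y) ^ (Suc N - i) / qfact q (Suc N - i)) y)"
    unfolding hh_sum[abs_def] qderiv_sum qderiv_cmult by simp
  also have "\<dots> = (\<Sum>i=0..N. AA $ i * (qnum q 2 * ((qnum q 2 * y) ^ (N - i) / qfact q (N - i))))"
    by (simp add: D_e[OF q y] Suc_diff_le)
  also have "\<dots> = qnum q 2 * hh q N y"
    unfolding hh_sum by (simp add: sum_distrib_left algebra_simps)
  finally show ?thesis .
qed

lemma D_iter:
  assumes q: "q > 1"
  shows "l \<le> N \<Longrightarrow> y \<noteq> 0 \<Longrightarrow> (qderiv q ^^ l) (\<lambda>y. K * hh q N y) y = K * qnum q 2 ^ l * hh q (N - l) y"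
proof (induction l arbitrary: y)
  case 0 then show ?case by simp
next
  case (Suc l)
  have qy: "q * y \<noteq> 0" using Suc.prems q by simp
  have NS: "N - l = Suc (N - Suc l)" using Suc.prems by simp
  have "(qderiv q ^^ Suc l) (\<lambda>y. K * hh q N y) y
      = ((qderiv q ^^ l) (\<lambda>y. K * hh q N y) (q * y) - (qderiv q ^^ l) (\<lambda>y. K * hh q N y) y) / ((q - 1) * y)"
    by (simp add: qderiv_def)
  also have "\<dots> = (K * qnum q 2 ^ l) * qderiv q (hh q (N - l)) y"
  proof -
    have lN: "l \<le> N" using Suc.prems by simp
    have i1: "(qderiv q ^^ l) (\<lambda>y. K * hh q N y) (q * y) = K * qnum q 2 ^ l * hh q (N - l) (q * y)"
      using Suc.IH[OF lN qy] .
    have i2: "(qderiv q ^^ l) (\<lambda>y. K * hh q N y) y = K * qnum q 2 ^ l * hh q (N - l) y"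
      using Suc.IH[OF lN Suc.prems(2)] .
    show ?thesis unfolding i1 i2 qderiv_def by (simp add: right_diff_distrib[symmetric])
  qed
  also have "\<dots> = K * qnum q 2 ^ Suc l * hh q (N - Suc l) y"
    unfolding NS D_hh[OF q Suc.prems(2)] by simp
  finally show ?case .
qed

lemma deriv_AA: "fps_deriv AA = - (fps_const 2 * fps_X * AA)"
  unfolding AA_def
  by (subst fps_compose_deriv) (simp_all add: fps_deriv_power)

lemma deriv_E:
  assumes q: "q > 1"
  shows "fps_deriv (qexp_fps q (qnum q 2 * y)) =
    fps_const (qnum q 2 * y) * Abs_fps (\<lambda>l. (1 - q\<^sup>2) ^ l * y ^ l / qnum q (l + 1)) * qexp_fps q (qnum q 2 * y)"
proof (rule fps_ext)
  fix n
  define c where "c = qnum q 2"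
  have c1: "(1 - q\<^sup>2) = c * (1 - q)" using qnum2[OF q] by (simp add: c_def power2_eq_square algebra_simps)
  have "(fps_const (c * y) * Abs_fps (\<lambda>l. (1 - q\<^sup>2) ^ l * y ^ l / qnum q (l + 1)) * qexp_fps q (c * y)) $ n
     = c * y * (\<Sum>i=0..n. (1 - q\<^sup>2) ^ i * y ^ i / qnum q (i + 1) * ((c * y) ^ (n - i) / qfact q (n - i)))"
    unfolding mult.assoc fps_mult_left_const_nth by (simp add: fps_mult_nth qexp_fps_def)
  also have "\<dots> = c * y * (\<Sum>i\<le>n. (c * y) ^ n * ((1 - q) ^ i / qnum q (i + 1) / qfact q (n - i)))"
    unfolding atLeast0AtMost
  proof (intro arg_cong[where f="\<lambda>t. c * y * t"] sum.cong refl)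
    fix i assume "i \<in> {..n}"
    then have e0: "(c*y)^i * (c*y)^(n-i) = (c*y)^n" by (simp add: power_add[symmetric])
    have e2: "(c*(1-q))^i * y^i * (c*y)^(n-i) = (1-q)^i * ((c*y)^i * (c*y)^(n-i))"
      by (simp add: power_mult_distrib mult_ac)
    have "(1 - q\<^sup>2) ^ i * y ^ i / qnum q (i + 1) * ((c * y) ^ (n - i) / qfact q (n - i))
       = ((c*(1-q))^i * y^i * (c*y)^(n-i)) / (qnum q (i + 1) * qfact q (n - i))"
      unfolding c1 by simp
    also have "\<dots> = ((1-q)^i * (c*y)^n) / (qnum q (i + 1) * qfact q (n - i))"
      unfolding e2 e0 ..
    also have "\<dots> = (c * y) ^ n * ((1 - q) ^ i / qnum q (i + 1) / qfact q (n - i))"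
      by simp
    finally show "(1 - q\<^sup>2) ^ i * y ^ i / qnum q (i + 1) * ((c * y) ^ (n - i) / qfact q (n - i)) =
      (c * y) ^ n * ((1 - q) ^ i / qnum q (i + 1) / qfact q (n - i))" .
  qed
  also have "\<dots> = c * y * (c * y) ^ n * gsum q n"
    by (simp add: gsum_def sum_distrib_left mult.assoc)
  also have "\<dots> = fps_deriv (qexp_fps q (c * y)) $ n"
    by (simp add: gsum_eq[OF q] qexp_fps_def)
  finally show "fps_deriv (qexp_fps q (qnum q 2 * y)) $ n = (fps_const (qnum q 2 * y) * Abs_fps (\<lambda>l. (1 - q\<^sup>2) ^ l * y ^ l / qnum q (l + 1)) * qexp_fps q (qnum q 2 * y)) $ n"
    by (simp add: c_def)
qed


lemma hh_rec:
  assumes q: "q > 1" and N: "N \<ge> 1"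
  shows "real (N + 1) * hh q (N + 1) y = - 2 * hh q (N - 1) y
     + qnum q 2 * y * (\<Sum>l\<le>N. (1 - q\<^sup>2) ^ l * y ^ l / qnum q (l + 1) * hh q (N - l) y)"
proof -
  define E where "E = qexp_fps q (qnum q 2 * y)"
  define W where "W = Abs_fps (\<lambda>l. (1 - q\<^sup>2) ^ l * y ^ l / qnum q (l + 1))"
  define P where "P = AA * E"
  have "fps_deriv P = fps_deriv AA * E + AA * fps_deriv E" by (simp add: P_def)
  also have "\<dots> = fps_const (-2) * (fps_X * P) + fps_const (qnum q 2 * y) * (W * P)"
  proof -
    have h1: "fps_deriv AA * E = fps_const (-2) * (fps_X * P)"
      unfolding deriv_AA P_def by (simp add: mult.assoc fps_const_neg[symmetric] del: fps_const_neg)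
    have h2: "AA * fps_deriv E = fps_const (qnum q 2 * y) * (W * P)"
      unfolding E_def deriv_E[OF q] W_def[symmetric] P_def by (simp only: mult.assoc mult.left_commute)
    show ?thesis unfolding h1 h2 ..
  qed
  finally have d: "fps_deriv P = fps_const (-2) * (fps_X * P) + fps_const (qnum q 2 * y) * (W * P)" .
  have hP: "hh q k y = P $ k" for k by (simp add: hh_def P_def E_def)
  have "real (N + 1) * hh q (N + 1) y = fps_deriv P $ N" by (simp add: hP)
  also have "\<dots> = - 2 * P $ (N - 1) + qnum q 2 * y * (\<Sum>l=0..N. W $ l * P $ (N - l))"
    unfolding d fps_add_nth fps_mult_left_const_nth fps_X_mult_nth using N by (simp add: fps_mult_nth)
  finally show ?thesis by (simp add: hP W_def atLeast0AtMost)
qed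


lemma split01: "(N::nat) \<ge> 1 \<Longrightarrow> (\<Sum>l\<le>N. f l) = f 0 + f 1 + (\<Sum>l=2..N. (f l :: real))"
proof -
  assume N: "N \<ge> 1"
  have "{..N} = {0,1} \<union> {2..N}" using N by auto
  then have "(\<Sum>l\<le>N. f l) = (\<Sum>l\<in>{0,1}. f l) + (\<Sum>l=2..N. f l)"
    by (simp add: sum.union_disjoint)
  then show ?thesis by simp
qed

theorem mainTheorem5:
  fixes q x :: real and N :: nat
  assumes "q > 1" and "N \<ge> 1" and "x \<noteq> 0"
  shows "qHermite (N + 1) x q =
    qnum q (N + 1) / real (N + 1) *
      ( qnum q 2 * x * qHermite N x q
        - (2 / qnum q 2 + (q - 1) * x ^ 2) * qderiv q (\<lambda>y. qHermite N y q) x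
        + (\<Sum>l=2..N. (1 - q ^ 2) ^ l * x ^ (l + 1) / (qnum q 2 ^ (l - 1) * qnum q (l + 1))
              * ((qderiv q ^^ l) (\<lambda>y. qHermite N y q)) x))"
proof -
  note q = assms(1) and N = assms(2) and x = assms(3)
  define c where "c = qnum q 2"
  define F where "F = qfact q N"
  have c: "c = q + 1" using qnum2[OF q] by (simp add: c_def)
  have cne: "c \<noteq> 0" using c q by simp
  have fH: "(\<lambda>y. qHermite N y q) = (\<lambda>y. F * hh q N y)" by (simp add: qHermite_hh F_def)
  have D1: "qderiv q (\<lambda>y. F * hh q N y) x = F * c * hh q (N - 1) x"
    using D_iter[OF q, of 1 N x F] N x by (simp add: c_def)
  define w where "w l = (1 - q\<^sup>2) ^ l * x ^ l / qnum q (l + 1) * hh q (N - l) x" for l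
  have Ssum: "(\<Sum>l=2..N. (1 - q ^ 2) ^ l * x ^ (l + 1) / (c ^ (l - 1) * qnum q (l + 1))
              * ((qderiv q ^^ l) (\<lambda>y. F * hh q N y)) x) = F * c * x * (\<Sum>l=2..N. w l)"
    unfolding sum_distrib_left
  proof (rule sum.cong[OF refl])
    fix l assume "l \<in> {2..N}"
    then have l: "2 \<le> l" "l \<le> N" by auto
    have cl: "c ^ l = c * c ^ (l - 1)" using l by (simp add: power_eq_if)
    have xl: "x ^ (l + 1) = x * x ^ l" by simp
    show "(1 - q ^ 2) ^ l * x ^ (l + 1) / (c ^ (l - 1) * qnum q (l + 1))
              * ((qderiv q ^^ l) (\<lambda>y. F * hh q N y)) x = F * c * x * w l"
      unfolding D_iter[OF q l(2) x] w_def c_def[symmetric] cl xl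
      using cne by (simp add: field_simps)
  qed
  have rec: "real (N + 1) * hh q (N + 1) x = - 2 * hh q (N - 1) x + c * x * (hh q N x + w 1 + (\<Sum>l=2..N. w l))"
    using hh_rec[OF q N, of x] split01[OF N, of w] by (simp add: w_def c_def qnum_def)
  have w1: "w 1 = (1 - q) * x * hh q (N - 1) x"
  proof -
    have q2: "qnum q (1 + 1) = c" by (simp add: c_def numeral_2_eq_2)
    show ?thesis unfolding w_def q2 using cne by (simp add: c field_simps power2_eq_square)
  qed
  have inner: "c * x * (F * hh q N x) - (2 / c + (q - 1) * x ^ 2) * (F * c * hh q (N - 1) x)
      + F * c * x * (\<Sum>l=2..N. w l) = F * (real (N + 1) * hh q (N + 1) x)"
    unfolding rec w1 using cne by (simp add: field_simps power2_eq_square)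
  have qf: "qfact q (N + 1) = F * qnum q (N + 1)" by (simp add: F_def qfact_Suc)
  show ?thesis
    unfolding fH D1 c_def[symmetric] Ssum qHermite_hh F_def[symmetric] inner qf
    by simp
qed

end
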